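(* Let $n\ge1$ and $u,v\in V_n$. There exists a valid rectangular pattern of tiles in $\mathcal T'_n$ whose sequence of bottom labels is $\tau_n(v)$ and whose sequence of left labels is $\tau_n(u)$ if and only if $$(u,v)\in (V_n\setminus Z_n\times V_n\setminus Z_n)\cup(M_n\cap Z_n\times M_n\cap Z_n)\cup(M_n\setminus Z_n\times Z_n)\cup(Z_n\times M_n\setminus Z_n).$$
   Context: Write $\bar m=m+1$. $V_n=\{(v_0,v_1,v_2)\in\mathbb{Z}^3: 0\le v_0\le v_1\le 1,\ v_1\le v_2\le n+1\}$, elements written as words $v_0v_1v_2$. $Z_n=\{v_0v_1v_2\in V_n: v_0=0\}$, $M_n=\{v_0v_1v_2\in V_n:v_2\ge n\}$. A Wang tile is $t=(a,b,c,d)$ with $\mathrm{RIGHT}(t)=a$, $\mathrm{TOP}(t)=b$, $\mathrm{LEFT}(t)=c$, $\mathrm{BOTTOM}(t)=d$; $\hat t=(b,a,d,c)$, $\hat S=\{\hat t:t\in S\}$. Define (as (right, top, left, bottom)): $W_n=\{(11(i+1),11(j+1),11i,11j):1\le i,j\le n\}$; $B'_n=\{(00(i+1),111,00i,11n):0\le i\le n\}$; $G_n=\{(01(i+1),111,00i,11(n+1)):0\le i\le n\}$; $Y_n=\{(01(i+1),112,01i,11(n+1)):1\le i\le n\}$; $A_n=\{(00(i+1),112,01i,11n):1\le i\le n\}$; $J'_n=\{((0,k,l),(0,r,s),(0,s,r+n),(0,l,k+n)):(k,l),(r,s)\in\{(0,0),(0,1),(1,1)\}\}$. $\mathcal T'_n=W_n\cup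 B'_n\cup G_n\cup Y_n\cup A_n\cup\hat B'_n\cup\hat G_n\cup\hat Y_n\cup\hat A_n\cup J'_n$. A rectangular pattern is valid if adjacent tiles agree on their common edge; its bottom labels are the bottom labels of its bottom row read left to right, its left labels the left labels of its left column read bottom to top. $\tau_n:V_n\to V_n^*$ is $\tau_n(xyz)=(0,x-y+1,n)\cdot(11n)^{z-x-1}\cdot(11\bar n)^{n+1-z}$ if $x\ne z$, and $\tau_n(xyz)=(0,x-y+1,n+1)\cdot(11\bar n)^{n-z}$ if $x=z$ (concatenation of sequences; exponents denote repetition). *)

theory Defs
  imports Main
begin

type_synonym label = "int \<times> int \<times> int"
type_synonym tile = "label \<times> label \<times> label \<times> label"

definition RIGHT :: "tile \<Rightarrow> label" where "RIGHT t = fst t"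
definition TOP :: "tile \<Rightarrow> label" where "TOP t = fst (snd t)"
definition LEFT :: "tile \<Rightarrow> label" where "LEFT t = fst (snd (snd t))"
definition BOTTOM :: "tile \<Rightarrow> label" where "BOTTOM t = snd (snd (snd t))"

definition hat :: "tile \<Rightarrow> tile" where
  "hat t = (TOP t, RIGHT t, BOTTOM t, LEFT t)"

definition Vn :: "nat \<Rightarrow> label set" where
  "Vn n = {(v0, v1, v2). 0 \<le> v0 \<and> v0 \<le> v1 \<and> v1 \<le> 1 \<and> v1 \<le> v2 \<and> v2 \<le> int n + 1}"

definition Zn :: "nat \<Rightarrow> label set" where
  "Zn n = {v \<in> Vn n. fst v = 0}"

definition Mn :: "nat \<Rightarrow> label set" where
  "Mn n = {v \<in> Vn n. snd (snd v) \<ge> int n}"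

definition Wn :: "nat \<Rightarrow> tile set" where
  "Wn n = {((1,1,i+1), (1,1,j+1), (1,1,i), (1,1,j)) | i j. 1 \<le> i \<and> i \<le> int n \<and> 1 \<le> j \<and> j \<le> int n}"

definition Bn' :: "nat \<Rightarrow> tile set" where
  "Bn' n = {((0,0,i+1), (1,1,1), (0,0,i), (1,1,int n)) | i. 0 \<le> i \<and> i \<le> int n}"

definition Gn :: "nat \<Rightarrow> tile set" where
  "Gn n = {((0,1,i+1), (1,1,1), (0,0,i), (1,1,int n + 1)) | i. 0 \<le> i \<and> i \<le> int n}"

definition Yn :: "nat \<Rightarrow> tile set" where
  "Yn n = {((0,1,i+1), (1,1,2), (0,1,i), (1,1,int n + 1)) | i. 1 \<le> i \<and> i \<le> int n}"

definition An :: "nat \<Rightarrow> tile set" where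
  "An n = {((0,0,i+1), (1,1,2), (0,1,i), (1,1,int n)) | i. 1 \<le> i \<and> i \<le> int n}"

definition Jn' :: "nat \<Rightarrow> tile set" where
  "Jn' n = {((0,k,l), (0,r,s), (0,s,r + int n), (0,l,k + int n)) | k l r s.
              (k,l) \<in> {(0,0),(0,1),(1,1)} \<and> (r,s) \<in> {(0,0),(0,1),(1,1)}}"

definition Tn' :: "nat \<Rightarrow> tile set" where
  "Tn' n = Wn n \<union> Bn' n \<union> Gn n \<union> Yn n \<union> An n
          \<union> hat ` Bn' n \<union> hat ` Gn n \<union> hat ` Yn n \<union> hat ` An n \<union> Jn' n"

text \<open>A rectangular pattern of width w and height h: P i j is the tile in column i
  (from the left, i < w) and row j (from the bottom, j < h).\<close>

definition valid_pattern :: "tile set \<Rightarrow> nat \<Rightarrow> nat \<Rightarrow> (nat \<Rightarrow> nat \<Rightarrow> tile) \<Rightarrow> bool" where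
  "valid_pattern T w h P \<longleftrightarrow>
     (\<forall>i<w. \<forall>j<h. P i j \<in> T) \<and>
     (\<forall>i j. Suc i < w \<and> j < h \<longrightarrow> RIGHT (P i j) = LEFT (P (Suc i) j)) \<and>
     (\<forall>i j. i < w \<and> Suc j < h \<longrightarrow> TOP (P i j) = BOTTOM (P i (Suc j)))"

definition bottom_labels :: "nat \<Rightarrow> (nat \<Rightarrow> nat \<Rightarrow> tile) \<Rightarrow> label list" where
  "bottom_labels w P = map (\<lambda>i. BOTTOM (P i 0)) [0..<w]"

definition left_labels :: "nat \<Rightarrow> (nat \<Rightarrow> nat \<Rightarrow> tile) \<Rightarrow> label list" where
  "left_labels h P = map (\<lambda>j. LEFT (P 0 j)) [0..<h]"

definition tau :: "nat \<Rightarrow> label \<Rightarrow> label list" where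
  "tau n v = (case v of (x, y, z) \<Rightarrow>
     if x \<noteq> z then
       [(0, x - y + 1, int n)] @ replicate (nat (z - x - 1)) (1, 1, int n)
         @ replicate (nat (int n + 1 - z)) (1, 1, int n + 1)
     else [(0, x - y + 1, int n + 1)] @ replicate (nat (int n - z)) (1, 1, int n + 1))"

end

theory Submission
  imports Defs
begin

lemma tile_bot1: "t \<in> Tn' n \<Longrightarrow> fst (BOTTOM t) = 1 \<Longrightarrow> fst (TOP t) = 1"
  unfolding Tn'_def Wn_def Bn'_def Gn_def Yn_def An_def Jn'_def hat_def RIGHT_def TOP_def LEFT_def BOTTOM_def
  by auto

lemma tile_left1: "t \<in> Tn' n \<Longrightarrow> fst (LEFT t) = 1 \<Longrightarrow> fst (RIGHT t) = 1"
  unfolding Tn'_def Wn_def Bn'_def Gn_def Yn_def An_def Jn'_def hat_def RIGHT_def TOP_def LEFT_def BOTTOM_def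
  by auto

lemma tile_W: "t \<in> Tn' n \<Longrightarrow> fst (LEFT t) = 1 \<Longrightarrow> fst (BOTTOM t) = 1 \<Longrightarrow>
   snd (snd (TOP t)) = snd (snd (BOTTOM t)) + 1 \<and> snd (snd (BOTTOM t)) \<le> int n"
  unfolding Tn'_def Wn_def Bn'_def Gn_def Yn_def An_def Jn'_def hat_def RIGHT_def TOP_def LEFT_def BOTTOM_def
  by auto

lemma tile_C: "t \<in> Tn' n \<Longrightarrow> snd (snd (BOTTOM t)) = int n + 1 \<Longrightarrow> fst (RIGHT t) = 0 \<and> fst (snd (RIGHT t)) = 1"
  unfolding Tn'_def Wn_def Bn'_def Gn_def Yn_def An_def Jn'_def hat_def RIGHT_def TOP_def LEFT_def BOTTOM_def
  by auto

lemma tile_D: "t \<in> Tn' n \<Longrightarrow> fst (BOTTOM t) = 1 \<Longrightarrow> fst (LEFT t) = 0 \<Longrightarrow> fst (snd (LEFT t)) = 1 \<Longrightarrow> snd (snd (TOP t)) = 2"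
  unfolding Tn'_def Wn_def Bn'_def Gn_def Yn_def An_def Jn'_def hat_def RIGHT_def TOP_def LEFT_def BOTTOM_def
  by auto

lemma hat_hat[simp]: "hat (hat t) = t"
  unfolding hat_def RIGHT_def TOP_def LEFT_def BOTTOM_def by (cases t) auto

lemma hat_T: "t \<in> Tn' n \<Longrightarrow> hat t \<in> Tn' n"
proof -
  assume "t \<in> Tn' n"
  then consider "t \<in> Wn n" | "t \<in> Jn' n" | "t \<in> Bn' n \<union> Gn n \<union> Yn n \<union> An n" | "hat t \<in> Bn' n \<union> Gn n \<union> Yn n \<union> An n"
    unfolding Tn'_def by auto
  then show ?thesis
  proof cases
    case 1 then show ?thesis unfolding Tn'_def Wn_def hat_def RIGHT_def TOP_def LEFT_def BOTTOM_def by auto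
  next
    case 2 then show ?thesis unfolding Tn'_def Jn'_def hat_def RIGHT_def TOP_def LEFT_def BOTTOM_def by auto
  next
    case 3 then show ?thesis unfolding Tn'_def by auto
  next
    case 4 then show ?thesis unfolding Tn'_def by auto
  qed
qed

definition cc :: "label \<Rightarrow> nat \<Rightarrow> int" where
  "cc v i = (if fst v + int i \<ge> snd (snd v) then 1 else 0)"

lemma tau_len: "n \<ge> 1 \<Longrightarrow> (x,y,z) \<in> Vn n \<Longrightarrow> length (tau n (x,y,z)) = nat (int n + 1 - x)"
  unfolding Vn_def tau_def by (auto simp: nat_diff_distrib)

lemma tau_nth0: "(x,y,z) \<in> Vn n \<Longrightarrow> tau n (x,y,z) ! 0 = (0, x - y + 1, int n + cc (x,y,z) 0)"
  unfolding Vn_def tau_def cc_def by auto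

lemma tau_nth: "(x,y,z) \<in> Vn n \<Longrightarrow> 1 \<le> i \<Longrightarrow> i < length (tau n (x,y,z)) \<Longrightarrow>
   tau n (x,y,z) ! i = (1, 1, int n + cc (x,y,z) i)"
  unfolding Vn_def tau_def cc_def
  by (cases i) (auto simp: nth_append)


lemma transpose_valid:
  assumes "valid_pattern (Tn' n) w h P"
  shows "valid_pattern (Tn' n) h w (\<lambda>i j. hat (P j i))"
    "bottom_labels h (\<lambda>i j. hat (P j i)) = left_labels h P"
    "left_labels w (\<lambda>i j. hat (P j i)) = bottom_labels w P"
  using assms unfolding valid_pattern_def bottom_labels_def left_labels_def
  by (auto simp: hat_T) (auto simp: hat_def RIGHT_def TOP_def LEFT_def BOTTOM_def)

lemma nec:
  assumes n1: "n \<ge> 1" and V: "valid_pattern (Tn' n) w h P"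
    and B: "bottom_labels w P = tau n v" and L: "left_labels h P = tau n u"
    and u: "u \<in> Zn n" and v: "v \<in> Vn n"
  shows "v \<in> Mn n"
proof (rule ccontr)
  assume nm: "v \<notin> Mn n"
  obtain x y z where vx: "v = (x,y,z)" by (cases v) auto
  obtain yu zu where ux: "u = (0,yu,zu)" and uV: "u \<in> Vn n" using u unfolding Zn_def by (cases u) auto
  have vV: "(x,y,z) \<in> Vn n" using v vx by simp
  have zn: "z < int n" using nm v vx unfolding Mn_def by auto
  have xr: "0 \<le> x" "x \<le> y" "y \<le> 1" "y \<le> z" using vV unfolding Vn_def by auto
  have wl: "w = nat (int n + 1 - x)"
  proof -
    have "length (bottom_labels w P) = w" unfolding bottom_labels_def by simp
    then show ?thesis using tau_len[OF n1 vV] B vx by simp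
  qed
  have hl: "h = n + 1"
  proof -
    have "length (left_labels h P) = h" unfolding left_labels_def by simp
    then show ?thesis using tau_len[OF n1, of 0 yu zu] uV ux L by simp
  qed
  have bot: "BOTTOM (P i 0) = tau n v ! i" if "i < w" for i
    using B[symmetric] that unfolding bottom_labels_def by simp
  have lft: "LEFT (P 0 j) = tau n u ! j" if "j < h" for j
    using L[symmetric] that unfolding left_labels_def by simp
  have PT: "P i j \<in> Tn' n" if "i < w" "j < h" for i j using V that unfolding valid_pattern_def by auto
  have HR: "RIGHT (P i j) = LEFT (P (Suc i) j)" if "Suc i < w" "j < h" for i j using V that unfolding valid_pattern_def by auto
  have VT: "TOP (P i j) = BOTTOM (P i (Suc j))" if "i < w" "Suc j < h" for i j using V that unfolding valid_pattern_def by auto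
  have L1: "\<forall>i<w. 1 \<le> i \<longrightarrow> fst (BOTTOM (P i j)) = 1" if "j < h" for j
    using that
  proof (induction j)
    case 0
    then show ?case using bot tau_nth[OF vV] wl tau_len[OF n1 vV] vx by auto
  next
    case (Suc j)
    then show ?case using VT[of _ j] tile_bot1[OF PT] by (metis Suc_lessD)
  qed
  have L2: "\<forall>j<h. 1 \<le> j \<longrightarrow> fst (LEFT (P i j)) = 1" if "i < w" for i
    using that
  proof (induction i)
    case 0
    then show ?case using lft tau_nth[of 0 yu zu n] uV ux hl tau_len[OF n1, of 0 yu zu] by auto
  next
    case (Suc i)
    then show ?case using HR[of i] tile_left1[OF PT] by (metis Suc_lessD)
  qed
  have L3: "snd (snd (TOP (P i j))) = snd (snd (BOTTOM (P i j))) + 1 \<and> snd (snd (BOTTOM (P i j))) \<le> int n"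
    if "1 \<le> i" "i < w" "1 \<le> j" "j < h" for i j
    using tile_W[OF PT[OF that(2,4)]] L1[OF that(4)] L2[OF that(2)] that by auto
  define i0 where "i0 = nat (int n - x)"
  have i0w: "i0 < w" "1 \<le> i0" using wl zn xr n1 unfolding i0_def by auto
  have C: "fst (RIGHT (P (i0 - 1) 0)) = 0 \<and> fst (snd (RIGHT (P (i0 - 1) 0))) = 1"
  proof (rule tile_C[OF PT])
    show "i0 - 1 < w" "0 < h" using i0w hl by auto
    show "snd (snd (BOTTOM (P (i0 - 1) 0))) = int n + 1"
    proof (cases "i0 - 1 = 0")
      case True
      then show ?thesis using bot[of 0] tau_nth0[OF vV] vx i0w zn xr unfolding cc_def i0_def by auto
    next
      case False
      then show ?thesis using bot[of "i0 - 1"] tau_nth[OF vV, of "i0 - 1"] tau_len[OF n1 vV] wl vx i0w zn xr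
        unfolding cc_def i0_def by auto
    qed
  qed
  have D: "snd (snd (TOP (P i0 0))) = 2"
  proof (rule tile_D[OF PT])
    show "i0 < w" "0 < h" using i0w hl by auto
    show "fst (BOTTOM (P i0 0)) = 1" using bot[of i0] tau_nth[OF vV, of i0] tau_len[OF n1 vV] wl vx i0w by auto
    show "fst (LEFT (P i0 0)) = 0" "fst (snd (LEFT (P i0 0))) = 1"
      using C HR[of "i0 - 1" 0] i0w hl by auto
  qed
  have L6: "snd (snd (BOTTOM (P i0 j))) \<ge> int j + 1" if "1 \<le> j" "j < h" for j
    using that
  proof (induction j)
    case 0 then show ?case by simp
  next
    case (Suc j)
    show ?case
    proof (cases "j = 0")
      case True
      then show ?thesis using D VT[of i0 0] i0w Suc by auto
    next
      case False
      then have "snd (snd (BOTTOM (P i0 j))) \<ge> int j + 1" using Suc by auto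
      then show ?thesis using L3[of i0 j] VT[of i0 j] i0w Suc False by auto
    qed
  qed
  show False using L6[of n] L3[of i0 n] i0w hl n1 by auto
qed


definition ll :: "label \<Rightarrow> int" where "ll v = fst v - fst (snd v) + 1"

definition rowt :: "nat \<Rightarrow> label \<Rightarrow> nat \<Rightarrow> tile" where
  "rowt n v i = ((0, cc v i, ll v + int i), (1,1,1 + cc v (i-1)), (0, cc v (i-1), ll v + int i - 1), (1,1,int n + cc v i))"

definition Jt :: "nat \<Rightarrow> label \<Rightarrow> label \<Rightarrow> tile" where
  "Jt n u v = ((0, cc v 0, ll v), (0, cc u 0, ll u), (0, ll u, cc u 0 + int n), (0, ll v, cc v 0 + int n))"

definition Wt :: "label \<Rightarrow> label \<Rightarrow> nat \<Rightarrow> nat \<Rightarrow> tile" where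
  "Wt u v i j = ((1,1,cc u (j-1) + int i + 1), (1,1,cc v (i-1) + int j + 1), (1,1,cc u (j-1) + int i), (1,1,cc v (i-1) + int j))"

definition Pat :: "nat \<Rightarrow> label \<Rightarrow> label \<Rightarrow> nat \<Rightarrow> nat \<Rightarrow> tile" where
  "Pat n u v i j = (if i = 0 \<and> j = 0 then Jt n u v else if j = 0 then rowt n v i
     else if i = 0 then hat (rowt n u j) else Wt u v i j)"

lemma rowt_mem:
  assumes "(x,y,z) \<in> Vn n" "1 \<le> i" "int i \<le> int n - x"
  shows "rowt n (x,y,z) i \<in> Tn' n"
proof -
  have r: "0 \<le> x" "x \<le> y" "y \<le> 1" "y \<le> z" "z \<le> int n + 1" using assms(1) unfolding Vn_def by auto
  let ?m = "x - y + int i"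
  have m: "0 \<le> ?m" "?m \<le> int n" using r assms by auto
  consider "x + int i < z" | "x + int (i - 1) < z" "x + int i \<ge> z" | "x + int (i - 1) \<ge> z" by linarith
  then show ?thesis
  proof cases
    case 1
    then have "x + int (i-1) < z" by linarith
    then have "rowt n (x,y,z) i \<in> Bn' n" unfolding Bn'_def rowt_def cc_def ll_def
      using 1 m by (intro CollectI exI[of _ ?m]) auto
    then show ?thesis unfolding Tn'_def by auto
  next
    case 2
    then have "rowt n (x,y,z) i \<in> Gn n" unfolding Gn_def rowt_def cc_def ll_def
      using m by (intro CollectI exI[of _ ?m]) auto
    then show ?thesis unfolding Tn'_def by auto
  next
    case 3
    then have "x + int i \<ge> z" by linarith
    then have "rowt n (x,y,z) i \<in> Yn n" unfolding Yn_def rowt_def cc_def ll_def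
      using 3 m r assms by (intro CollectI exI[of _ ?m]) auto
    then show ?thesis unfolding Tn'_def by auto
  qed
qed

lemma Jt_mem:
  assumes "(x,y,z) \<in> Vn n" "(x',y',z') \<in> Vn n"
  shows "Jt n (x,y,z) (x',y',z') \<in> Tn' n"
proof -
  have r: "0 \<le> x" "x \<le> y" "y \<le> 1" "y \<le> z" "0 \<le> x'" "x' \<le> y'" "y' \<le> 1" "y' \<le> z'"
    using assms unfolding Vn_def by auto
  have "Jt n (x,y,z) (x',y',z') \<in> Jn' n" unfolding Jn'_def Jt_def cc_def ll_def
    apply (rule CollectI)
    apply (rule exI[of _ "cc (x',y',z') 0"], rule exI[of _ "ll (x',y',z')"])
    apply (rule exI[of _ "cc (x,y,z) 0"], rule exI[of _ "ll (x,y,z)"])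
    using r unfolding cc_def ll_def by auto
  then show ?thesis unfolding Tn'_def by auto
qed


lemma Wt_mem:
  assumes n1: "n \<ge> 1" and uV: "(xu,yu,zu) \<in> Vn n" and vV: "(x,y,z) \<in> Vn n"
    and cu: "xu = 0 \<Longrightarrow> z \<ge> int n" and cv: "x = 0 \<Longrightarrow> zu \<ge> int n"
    and i: "1 \<le> i" "int i \<le> int n - x" and j: "1 \<le> j" "int j \<le> int n - xu"
  shows "Wt (xu,yu,zu) (x,y,z) i j \<in> Tn' n"
proof -
  have r: "0 \<le> x" "x \<le> y" "y \<le> 1" "y \<le> z" "0 \<le> xu" "xu \<le> yu" "yu \<le> 1" "yu \<le> zu"
    using uV vV unfolding Vn_def by auto
  have a: "1 \<le> cc (xu,yu,zu) (j-1) + int i \<and> cc (xu,yu,zu) (j-1) + int i \<le> int n"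
    using r i j cv unfolding cc_def by (cases "x = 0") auto
  have b: "1 \<le> cc (x,y,z) (i-1) + int j \<and> cc (x,y,z) (i-1) + int j \<le> int n"
    using r i j cu unfolding cc_def by (cases "xu = 0") auto
  have "Wt (xu,yu,zu) (x,y,z) i j \<in> Wn n" unfolding Wn_def Wt_def
    apply (rule CollectI)
    apply (rule exI[of _ "cc (xu,yu,zu) (j-1) + int i"], rule exI[of _ "cc (x,y,z) (i-1) + int j"])
    using a b by auto
  then show ?thesis unfolding Tn'_def by auto
qed

lemma suff:
  assumes n1: "n \<ge> 1" and uV: "(xu,yu,zu) \<in> Vn n" and vV: "(x,y,z) \<in> Vn n"
    and cu: "xu = 0 \<Longrightarrow> z \<ge> int n" and cv: "x = 0 \<Longrightarrow> zu \<ge> int n"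
  defines "w \<equiv> nat (int n + 1 - x)" and "h \<equiv> nat (int n + 1 - xu)"
  shows "valid_pattern (Tn' n) w h (Pat n (xu,yu,zu) (x,y,z))
     \<and> bottom_labels w (Pat n (xu,yu,zu) (x,y,z)) = tau n (x,y,z)
     \<and> left_labels h (Pat n (xu,yu,zu) (x,y,z)) = tau n (xu,yu,zu)"
proof (intro conjI)
  let ?P = "Pat n (xu,yu,zu) (x,y,z)"
  have r: "0 \<le> x" "x \<le> y" "y \<le> 1" "y \<le> z" "0 \<le> xu" "xu \<le> yu" "yu \<le> 1" "yu \<le> zu"
    using uV vV unfolding Vn_def by auto
  have mem: "?P i j \<in> Tn' n" if "i < w" "j < h" for i j
  proof -
    have i: "int i \<le> int n - x" and j: "int j \<le> int n - xu" using that r unfolding w_def h_def by auto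
    show ?thesis
    proof (cases "i = 0")
      case True
      show ?thesis
      proof (cases "j = 0")
        case True
        then show ?thesis using \<open>i = 0\<close> Jt_mem[OF uV vV] unfolding Pat_def by simp
      next
        case False
        then show ?thesis using \<open>i = 0\<close> hat_T[OF rowt_mem[OF uV _ j]] unfolding Pat_def by simp
      qed
    next
      case False
      show ?thesis
      proof (cases "j = 0")
        case True
        then show ?thesis using \<open>i \<noteq> 0\<close> rowt_mem[OF vV _ i] unfolding Pat_def by simp
      next
        case False
        then show ?thesis using \<open>i \<noteq> 0\<close> Wt_mem[OF n1 uV vV cu cv _ i _ j] unfolding Pat_def by simp
      qed
    qed
  qed
  show "valid_pattern (Tn' n) w h ?P"
    unfolding valid_pattern_def
  proof (intro conjI allI impI)
    show "?P i j \<in> Tn' n" if "i < w" "j < h" for i j using mem that by auto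
    show "RIGHT (?P i j) = LEFT (?P (Suc i) j)" for i j
      unfolding Pat_def Jt_def rowt_def Wt_def hat_def RIGHT_def LEFT_def TOP_def BOTTOM_def by auto
    show "TOP (?P i j) = BOTTOM (?P i (Suc j))" for i j
      unfolding Pat_def Jt_def rowt_def Wt_def hat_def RIGHT_def LEFT_def TOP_def BOTTOM_def by auto
  qed
  show "bottom_labels w ?P = tau n (x,y,z)"
  proof (rule nth_equalityI)
    show "length (bottom_labels w ?P) = length (tau n (x, y, z))"
      unfolding bottom_labels_def w_def using tau_len[OF n1 vV] by simp
    show "bottom_labels w ?P ! i = tau n (x, y, z) ! i" if "i < length (bottom_labels w ?P)" for i
    proof -
      have iw: "i < w" using that unfolding bottom_labels_def by simp
      show ?thesis
      proof (cases "i = 0")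
        case True
        then show ?thesis using iw tau_nth0[OF vV] unfolding bottom_labels_def Pat_def Jt_def BOTTOM_def ll_def
          by simp
      next
        case False
        then show ?thesis using iw tau_nth[OF vV, of i] tau_len[OF n1 vV]
          unfolding bottom_labels_def Pat_def rowt_def BOTTOM_def w_def by simp
      qed
    qed
  qed
  show "left_labels h ?P = tau n (xu,yu,zu)"
  proof (rule nth_equalityI)
    show "length (left_labels h ?P) = length (tau n (xu,yu,zu))"
      unfolding left_labels_def h_def using tau_len[OF n1 uV] by simp
    show "left_labels h ?P ! i = tau n (xu,yu,zu) ! i" if "i < length (left_labels h ?P)" for i
    proof -
      have iw: "i < h" using that unfolding left_labels_def by simp
      show ?thesis
      proof (cases "i = 0")
        case True
        then show ?thesis using iw tau_nth0[OF uV] unfolding left_labels_def Pat_def Jt_def LEFT_def ll_def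
          by (simp add: add.commute)
      next
        case False
        then show ?thesis using iw tau_nth[OF uV, of i] tau_len[OF n1 uV]
          unfolding left_labels_def Pat_def rowt_def LEFT_def hat_def BOTTOM_def h_def by simp
      qed
    qed
  qed
qed


theorem proposition5p8:
  fixes n :: nat and u v :: label
  assumes "n \<ge> 1" and "u \<in> Vn n" and "v \<in> Vn n"
  shows "(\<exists>w h P. valid_pattern (Tn' n) w h P \<and>
                  bottom_labels w P = tau n v \<and> left_labels h P = tau n u)
         \<longleftrightarrow> (u, v) \<in> ((Vn n - Zn n) \<times> (Vn n - Zn n)) \<union> ((Mn n \<inter> Zn n) \<times> (Mn n \<inter> Zn n))
                      \<union> ((Mn n - Zn n) \<times> Zn n) \<union> (Zn n \<times> (Mn n - Zn n))"
  (is "?L \<longleftrightarrow> ?R")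
proof
  assume ?L
  then obtain w h P where V: "valid_pattern (Tn' n) w h P" and B: "bottom_labels w P = tau n v"
    and L: "left_labels h P = tau n u" by blast
  have 1: "u \<in> Zn n \<Longrightarrow> v \<in> Mn n" using nec[OF assms(1) V B L _ assms(3)] by blast
  have 2: "v \<in> Zn n \<Longrightarrow> u \<in> Mn n"
    using nec[OF assms(1) transpose_valid(1)[OF V], of u v] transpose_valid(2,3)[OF V] B L assms(2)
    by auto
  show ?R using 1 2 assms(2,3) unfolding Zn_def Mn_def by auto
next
  assume R: ?R
  obtain xu yu zu where ux: "u = (xu,yu,zu)" by (cases u) auto
  obtain x y z where vx: "v = (x,y,z)" by (cases v) auto
  have cu: "xu = 0 \<Longrightarrow> z \<ge> int n" and cv: "x = 0 \<Longrightarrow> zu \<ge> int n"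
    using R ux vx assms(2,3) unfolding Zn_def Mn_def by auto
  show ?L using suff[OF assms(1) assms(2)[unfolded ux] assms(3)[unfolded vx] cu cv] ux vx by blast
qed

end
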